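(* Let $(H,f)$ be a vertex-weighted graph with $H$ connected and $f$ not identically zero, and let $G=L(H,f)$. If $k(G)=1$, then at least one of the following holds: (i) $f(v)=1$ for some vertex $v$ of $H$; (ii) there exists a vertex $v$ of $H$ with $f(v)=0$ such that $K_H(v)$ contains a simplicial vertex of $G$.
   Context: All graphs are finite and simple. For a digraph $D$, its competition graph $C(D)$ has vertex set $V(D)$, two distinct vertices $u,v$ adjacent iff some vertex $x$ satisfies $(u,x),(v,x)\in A(D)$. The competition number $k(G)$ is the smallest nonnegative integer $k$ such that $G$ together with $k$ new isolated vertices is the competition graph of an acyclic digraph. For a positive integer $m$, $CP(m)$ is the complete multipartite graph with $m$ parts each of size two. A vertex-weighted graph $(H,f)$ is a graph $H$ with $f:V(H)\to\mathbb{Z}_{\ge0}$. The generalized line graph $L(H,f)$ is obtained from the disjoint union of the line graph $L(H)$ (vertex set $E(H)$, two distinct edges adjacent iff they share an endpoint) and the graphs $Q_v:=CP(f(v))$ for each $v$ with $f(v)>0$, by adding all edges between every vertex of $Q_v$ and every $e\in E(H)$ incident to $v$. $K_H(v)$ is the set of edges of $H$ incident to $v$. A vertex is simplicial if its neighborhood is a clique. *)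

theory Defs
  imports Main
begin

definition simple_graph :: "'a set \<Rightarrow> 'a set set \<Rightarrow> bool" where
  "simple_graph V E \<longleftrightarrow> finite V \<and> (\<forall>e\<in>E. e \<subseteq> V \<and> card e = 2)"

definition connected_graph :: "'a set \<Rightarrow> 'a set set \<Rightarrow> bool" where
  "connected_graph V E \<longleftrightarrow> V \<noteq> {} \<and>
     (\<forall>u\<in>V. \<forall>v\<in>V. (u, v) \<in> {(x, y). {x, y} \<in> E}\<^sup>*)"

definition competition_edges :: "'a set \<Rightarrow> ('a \<times> 'a) set \<Rightarrow> 'a set set" where
  "competition_edges V A = {{u, v} | u v. u \<in> V \<and> v \<in> V \<and> u \<noteq> v \<and>
      (\<exists>x. (u, x) \<in> A \<and> (v, x) \<in> A)}"

text \<open>G together with k new isolated vertices (tagged Inr) is the competition graph of an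
  acyclic digraph.\<close>
definition comp_representable :: "'a set \<Rightarrow> 'a set set \<Rightarrow> nat \<Rightarrow> bool" where
  "comp_representable V E k \<longleftrightarrow>
     (\<exists>A :: (('a + nat) \<times> ('a + nat)) set.
        A \<subseteq> (Inl ` V \<union> Inr ` {..<k}) \<times> (Inl ` V \<union> Inr ` {..<k}) \<and> acyclic A \<and>
        competition_edges (Inl ` V \<union> Inr ` {..<k}) A = (\<lambda>e. Inl ` e) ` E)"

definition competition_number :: "'a set \<Rightarrow> 'a set set \<Rightarrow> nat" where
  "competition_number V E = (LEAST k. comp_representable V E k)"

definition simplicial :: "'a set \<Rightarrow> 'a set set \<Rightarrow> 'a \<Rightarrow> bool" where
  "simplicial V E x \<longleftrightarrow>
     (\<forall>u\<in>V. \<forall>w\<in>V. {x, u} \<in> E \<and> {x, w} \<in> E \<and> u \<noteq> w \<longrightarrow> {u, w} \<in> E)"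

text \<open>Generalized line graph L(H,f). Vertices: Inl e for edges e of H, and
  Inr (v, i, b) for v with i < f v, b :: bool, forming CP(f v) with parts
  {(v,i,False),(v,i,True)}.\<close>
definition gl_vertices :: "'a set \<Rightarrow> 'a set set \<Rightarrow> ('a \<Rightarrow> nat) \<Rightarrow> ('a set + ('a \<times> nat \<times> bool)) set" where
  "gl_vertices VH EH f = Inl ` EH \<union> {Inr (v, i, b) | v i b. v \<in> VH \<and> i < f v}"

definition gl_edges :: "'a set \<Rightarrow> 'a set set \<Rightarrow> ('a \<Rightarrow> nat) \<Rightarrow> ('a set + ('a \<times> nat \<times> bool)) set set" where
  "gl_edges VH EH f =
     {{Inl e, Inl e'} | e e'. e \<in> EH \<and> e' \<in> EH \<and> e \<noteq> e' \<and> e \<inter> e' \<noteq> {}}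
   \<union> {{Inr (v, i, b), Inr (v, j, c)} | v i j b c. v \<in> VH \<and> i < f v \<and> j < f v \<and> i \<noteq> j}
   \<union> {{Inr (v, i, b), Inl e} | v i b e. v \<in> VH \<and> i < f v \<and> e \<in> EH \<and> v \<in> e}"

end

theory Submission
  imports Defs
begin

lemma rep_exists:
  assumes fin: "finite V" and E: "\<forall>e\<in>E. e \<subseteq> V \<and> card e = 2"
  shows "comp_representable V E (card E)"
proof -
  have "E \<subseteq> Pow V" using E by auto
  hence finE: "finite E" using fin by (metis finite_Pow_iff finite_subset)
  obtain g where g: "bij_betw g {..<card E} E" using ex_bij_betw_nat_finite[OF finE] by (auto simp: atLeast0LessThan)
  define V' where "V' = (Inl ` V \<union> Inr ` {..<card E} :: ('a + nat) set)"
  define A where "A = ({(Inl u, Inr i) | u i. i < card E \<and> u \<in> g i} :: (('a + nat) \<times> ('a + nat)) set)"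
  have gE: "\<And>i. i < card E \<Longrightarrow> g i \<in> E" using g by (auto simp: bij_betw_def)
  have sub: "A \<subseteq> V' \<times> V'"
    unfolding A_def V'_def using gE E by auto
  have tr: "(x,y) \<in> A\<^sup>+ \<Longrightarrow> x \<in> range Inl \<and> y \<in> range Inr" for x y
  proof (induction rule: trancl_induct)
    case (base y) then show ?case unfolding A_def by auto
  next
    case (step y z) then show ?case unfolding A_def by auto
  qed
  have acy: "acyclic A" unfolding acyclic_def using tr by fastforce
  have ce: "competition_edges V' A = (\<lambda>e. Inl ` e) ` E"
  proof
    show "competition_edges V' A \<subseteq> (\<lambda>e. Inl ` e) ` E"
    proof
      fix s :: "('a + nat) set" assume "s \<in> competition_edges V' A"
      then obtain a b x where s: "s = {a,b}" "a \<noteq> b" "(a,x)\<in>A" "(b,x)\<in>A"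
        unfolding competition_edges_def by blast
      then obtain u w i where uw: "a = Inl u" "b = Inl w" "x = Inr i" "i < card E" "u \<in> g i" "w \<in> g i"
        unfolding A_def by auto
      have "u \<noteq> w" using uw s by auto
      have c2: "card (g i) = 2" using gE E uw by auto
      have "g i = {u,w}"
      proof -
        have "{u,w} \<subseteq> g i" using uw by auto
        moreover have "card {u,w} = 2" using \<open>u\<noteq>w\<close> by auto
        moreover have "finite (g i)" using c2 by (intro card_ge_0_finite) simp
        ultimately show ?thesis using c2 by (metis card_subset_eq)
      qed
      hence "s = Inl ` (g i)" using s uw by auto
      thus "s \<in> (\<lambda>e. Inl ` e) ` E" using gE uw by auto
    qed
  next
    show "(\<lambda>e. Inl ` e) ` E \<subseteq> competition_edges V' A"
    proof
      fix s :: "('a + nat) set" assume "s \<in> (\<lambda>e. Inl ` e) ` E"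
      then obtain e where e: "e \<in> E" "s = Inl ` e" by auto
      then obtain i where i: "i < card E" "g i = e" using g unfolding bij_betw_def by (metis image_iff lessThan_iff)
      obtain u w where uw: "e = {u,w}" "u \<noteq> w" using E e card_2_iff by metis
      have "u \<in> V" "w \<in> V" using E e uw by auto
      moreover have "(Inl u, Inr i) \<in> A" "(Inl w, Inr i) \<in> A" unfolding A_def using i uw by auto
      ultimately show "s \<in> competition_edges V' A" unfolding competition_edges_def V'_def
        using e uw by blast
    qed
  qed
  show ?thesis unfolding comp_representable_def using sub acy ce V'_def by blast
qed

lemma simplicial_exists:
  assumes fin: "finite V" and ne: "V \<noteq> {}" and rep: "comp_representable V E 1"
  shows "\<exists>y\<in>V. simplicial V E y"
proof -
  obtain A :: "(('a + nat) \<times> ('a + nat)) set" where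
    A: "A \<subseteq> (Inl ` V \<union> Inr ` {..<1}) \<times> (Inl ` V \<union> Inr ` {..<1})" "acyclic A"
       "competition_edges (Inl ` V \<union> Inr ` {..<1}) A = (\<lambda>e. Inl ` e) ` E"
    using rep unfolding comp_representable_def by blast
  have finA: "finite A" using A(1) fin by (meson finite_Un finite_SigmaI finite_imageI finite_lessThan finite_subset)
  have "wf (A\<inverse>)" using finA A(2) by (simp add: finite_acyclic_wf acyclic_converse)
  then obtain x where x: "x \<in> Inl ` V" "\<And>y. (y,x) \<in> A\<inverse> \<Longrightarrow> y \<notin> Inl ` V"
    using ne by (metis (no_types, lifting) empty_is_image ex_in_conv wfE_min)
  then obtain y0 where y0: "x = Inl y0" "y0 \<in> V" by auto
  have key: "(Inl u, Inr 0) \<in> A" if "{y0,u} \<in> E" for u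
  proof -
    have "Inl ` {y0,u} \<in> (\<lambda>e. Inl ` e) ` E" using that by (rule imageI)
    hence "Inl ` {y0,u} \<in> competition_edges (Inl ` V \<union> Inr ` {..<1}) A" using A(3) by simp
    then obtain a b p where ab: "Inl ` {y0,u} = {a,b}" "(a,p)\<in>A" "(b,p)\<in>A"
      unfolding competition_edges_def by blast
    have "Inl y0 \<in> {a,b}" "Inl u \<in> {a,b}" using ab(1) by blast+
    hence p: "(Inl y0, p) \<in> A" "(Inl u, p) \<in> A" using ab by auto
    have "p \<notin> Inl ` V" using x(2) p(1) y0(1) by auto
    moreover have "p \<in> Inl ` V \<union> Inr ` {..<1}" using A(1) p by auto
    ultimately have "p = Inr 0" by auto
    thus ?thesis using p by simp
  qed
  have "simplicial V E y0"
    unfolding simplicial_def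
  proof (intro ballI impI)
    fix u w assume uw: "u \<in> V" "w \<in> V" "{y0, u} \<in> E \<and> {y0, w} \<in> E \<and> u \<noteq> w"
    have "(Inl u, Inr 0) \<in> A" "(Inl w, Inr 0) \<in> A" using key uw by auto
    hence "{Inl u, Inl w} \<in> competition_edges (Inl ` V \<union> Inr ` {..<1}) A"
      unfolding competition_edges_def using uw by blast
    hence "{Inl u, Inl w} \<in> ((\<lambda>e. Inl ` e) ` E :: ('a + nat) set set)" by (metis A(3))
    then obtain e where e: "{Inl u, Inl w} = (Inl ` e :: ('a + nat) set)" "e \<in> E" by (rule imageE) (rule that)
    have "e = {u,w}"
    proof -
      have "Inl ` e = (Inl ` {u,w} :: ('a + nat) set)" using e(1) by simp
      thus ?thesis using inj_image_eq_iff[OF inj_Inl] by blast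
    qed
    thus "{u,w} \<in> E" using e(2) by simp
  qed
  thus ?thesis using y0 by blast
qed

lemma l1: "v \<in> VH \<Longrightarrow> i < f v \<Longrightarrow> j < f v \<Longrightarrow> i \<noteq> j \<Longrightarrow> {Inr (v,i,b), Inr (v,j,c)} \<in> gl_edges VH EH f"
  unfolding gl_edges_def
  apply (rule UnI1, rule UnI2, rule CollectI)
  apply (rule exI[of _ v], rule exI[of _ i], rule exI[of _ j], rule exI[of _ b], rule exI[of _ c])
  by simp
lemma l2: "v \<in> VH \<Longrightarrow> i < f v \<Longrightarrow> e \<in> EH \<Longrightarrow> v \<in> e \<Longrightarrow> {Inl e, Inr (v,i,b)} \<in> gl_edges VH EH f"
  unfolding gl_edges_def
  apply (rule UnI2, rule CollectI)
  apply (rule exI[of _ v], rule exI[of _ i], rule exI[of _ b], rule exI[of _ e])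
  by (simp add: insert_commute)
lemma l3: "{Inr (v,j,False), Inr (v,j,True)} \<notin> gl_edges VH EH f"
  unfolding gl_edges_def
  apply (simp only: Un_iff mem_Collect_eq de_Morgan_disj not_ex)
  apply (intro conjI allI)
    apply (simp add: doubleton_eq_iff)
   apply (simp add: doubleton_eq_iff) apply blast
  apply (simp add: doubleton_eq_iff)
  done

theorem theorem2p8:
  fixes VH :: "'a set" and EH :: "'a set set" and f :: "'a \<Rightarrow> nat"
  assumes "simple_graph VH EH"
    and "connected_graph VH EH"
    and "\<exists>v\<in>VH. f v \<noteq> 0"
    and "competition_number (gl_vertices VH EH f) (gl_edges VH EH f) = 1"
  shows "(\<exists>v\<in>VH. f v = 1) \<or>
         (\<exists>v\<in>VH. f v = 0 \<and> (\<exists>e\<in>EH. v \<in> e \<and>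
             simplicial (gl_vertices VH EH f) (gl_edges VH EH f) (Inl e)))"
proof -
  let ?V = "gl_vertices VH EH f" and ?E = "gl_edges VH EH f"
  have finVH: "finite VH" and EH: "\<forall>e\<in>EH. e \<subseteq> VH \<and> card e = 2"
    using assms(1) unfolding simple_graph_def by auto
  have "EH \<subseteq> Pow VH" using EH by auto
  hence finEH: "finite EH" using finVH by (metis finite_Pow_iff finite_subset)
  have "({Inr (v, i, b) | v i b. v \<in> VH \<and> i < f v} :: ('a set + ('a \<times> nat \<times> bool)) set) = Inr ` (Sigma VH (\<lambda>v. {..<f v} \<times> UNIV))"
    by auto
  moreover have "finite (Inr ` (Sigma VH (\<lambda>v. {..<f v} \<times> (UNIV::bool set))) :: ('a set + ('a \<times> nat \<times> bool)) set)"
    using finVH by (intro finite_imageI finite_SigmaI) auto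
  ultimately have "finite ({Inr (v, i, b) | v i b. v \<in> VH \<and> i < f v} :: ('a set + ('a \<times> nat \<times> bool)) set)" by simp
  hence finV: "finite ?V" unfolding gl_vertices_def using finEH by simp
  have neV: "?V \<noteq> {}" using assms(3) unfolding gl_vertices_def by auto
  have Ecard: "\<forall>e\<in>?E. e \<subseteq> ?V \<and> card e = 2"
    unfolding gl_edges_def gl_vertices_def using EH by (auto simp: card_insert_if)
  have "comp_representable ?V ?E (card ?E)" using rep_exists[OF finV Ecard] .
  hence "comp_representable ?V ?E (competition_number ?V ?E)"
    unfolding competition_number_def by (rule LeastI)
  hence rep: "comp_representable ?V ?E 1" using assms(4) by simp
  obtain x where x: "x \<in> ?V" "simplicial ?V ?E x" using simplicial_exists[OF finV neV rep] by blast
  show ?thesis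
  proof (cases x)
    case (Inr t)
    then obtain v i b where t: "x = Inr (v,i,b)" "v \<in> VH" "i < f v"
      using x(1) unfolding gl_vertices_def by auto
    show ?thesis
    proof (cases "f v = 1")
      case True then show ?thesis using t by blast
    next
      case False
      define j where "j = (if i = 0 then 1 else (0::nat))"
      have j: "j < f v" "j \<noteq> i" using False t unfolding j_def by auto
      have v1: "Inr (v,j,False) \<in> ?V" and v2: "Inr (v,j,True) \<in> ?V" using j t unfolding gl_vertices_def by auto
      have e1: "{x, Inr (v,j,False)} \<in> ?E" and e2: "{x, Inr (v,j,True)} \<in> ?E"
        unfolding t(1) using t(2,3) j by (intro l1; simp)+
      have "{Inr (v,j,False), Inr (v,j,True)} \<in> ?E"
        using x(2)[unfolded simplicial_def, rule_format, OF v1 v2] e1 e2 by simp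
      hence False using l3[of v j VH EH f] by simp
      thus ?thesis ..
    qed
  next
    case (Inl e)
    then have e: "e \<in> EH" using x(1) unfolding gl_vertices_def by auto
    then obtain u where u: "u \<in> e" using EH by fastforce
    have uV: "u \<in> VH" using u e EH by auto
    consider "f u = 1" | "f u = 0" | "f u \<ge> 2" by linarith
    then show ?thesis
    proof cases
      case 1 then show ?thesis using uV by blast
    next
      case 2 then show ?thesis using uV u e x Inl by blast
    next
      case 3
      have v1: "Inr (u,0,False) \<in> ?V" and v2: "Inr (u,0,True) \<in> ?V" using 3 uV unfolding gl_vertices_def by auto
      have e1: "{x, Inr (u,0,False)} \<in> ?E" and e2: "{x, Inr (u,0,True)} \<in> ?E"
        unfolding Inl using 3 uV u e by (intro l2; simp)+
      have "{Inr (u,0,False), Inr (u,0,True)} \<in> ?E"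
        using x(2)[unfolded simplicial_def, rule_format, OF v1 v2] e1 e2 by simp
      hence False using l3[of u 0 VH EH f] by simp
      thus ?thesis ..
    qed
  qed
qed

end
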